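(* Let $a,b,c,k,m>0$ and consider the system $$\frac{dx}{dt}=bx(1-x-cy),\qquad \frac{dy}{dt}=y\Big(\frac{1}{1+kx}-y-ax-mxy\Big).$$ Let $k^*=\frac{1}{a}-1$. If $0<k<k^*$ and $0<c<1$, then the system is permanent: there exist constants $0<\mu\le M$, independent of the solution, such that every solution with $x(0)>0$, $y(0)>0$ satisfies $$\mu\le\liminf_{t\to+\infty}x(t)\le\limsup_{t\to+\infty}x(t)\le M,\qquad \mu\le\liminf_{t\to+\infty}y(t)\le\limsup_{t\to+\infty}y(t)\le M.$$
   Context: All parameters $a,b,c,k,m$ are positive constants. *)

theory Defs
  imports "HOL-Analysis.Analysis" "HOL-Library.Extended_Real" "HOL-Library.Liminf_Limsup"
begin

definition is_solution :: "real \<Rightarrow> real \<Rightarrow> real \<Rightarrow> real \<Rightarrow> real \<Rightarrow>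
    (real \<Rightarrow> real) \<Rightarrow> (real \<Rightarrow> real) \<Rightarrow> bool" where
  "is_solution a b c k m x y \<longleftrightarrow>
     (\<forall>t\<ge>0. (x has_real_derivative (b * x t * (1 - x t - c * y t))) (at t within {0..}) \<and>
            (y has_real_derivative (y t * (1 / (1 + k * x t) - y t - a * x t - m * x t * y t)))
               (at t within {0..}))"

end

theory Submission
  imports Defs
begin

lemma mvt2:
  fixes z z' :: "real \<Rightarrow> real"
  assumes "a < b" "continuous_on {a..b} z"
    and "\<And>t. a < t \<Longrightarrow> t < b \<Longrightarrow> (z has_real_derivative z' t) (at t)"
  shows "\<exists>\<xi>. a < \<xi> \<and> \<xi> < b \<and> z b - z a = (b - a) * z' \<xi>"
proof -
  obtain l \<xi> where h: "a < \<xi>" "\<xi> < b" "DERIV z \<xi> :> l" "z b - z a = (b - a) * l"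
    using MVT[OF assms(1,2)] assms(3) real_differentiable_def by blast
  have "l = z' \<xi>" using DERIV_unique[OF h(3) assms(3)[OF h(1,2)]] .
  then show ?thesis using h by blast
qed

lemma eventually_above:
  fixes z z' :: "real \<Rightarrow> real"
  assumes cont: "continuous_on {T..} z"
  and der: "\<And>t. t > T \<Longrightarrow> (z has_real_derivative z' t) (at t)"
  and H1: "\<And>t. t > T \<Longrightarrow> z t < L \<Longrightarrow> z' t > 0"
  and H2: "\<And>t. t > T \<Longrightarrow> z T \<le> z t \<Longrightarrow> z t < L \<Longrightarrow> z' t \<ge> \<delta>"
  and dpos: "\<delta> > 0"
  shows "\<exists>T'. \<forall>t\<ge>T'. L \<le> z t"
proof -
  have contI: "continuous_on {a..b} z" if "T \<le> a" for a b
    using continuous_on_subset[OF cont] that by auto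
  have inv: "L \<le> z t1" if t0: "T \<le> t0" "t0 \<le> t1" "L \<le> z t0" for t0 t1
  proof (rule ccontr)
    assume t1: "\<not> L \<le> z t1"
    define S where "S = {t0..t1} \<inter> z -` {L..}"
    have cS: "closed S" unfolding S_def
      by (rule continuous_closed_preimage[OF contI[OF t0(1)]]) auto
    have neS: "S \<noteq> {}" using t0 unfolding S_def by auto
    have bS: "bdd_above S" unfolding S_def by (auto intro: bdd_aboveI[of _ t1])
    define s where "s = Sup S"
    have sS: "s \<in> S" using closed_contains_Sup[OF neS bS cS] s_def by simp
    have s1: "t0 \<le> s" "s \<le> t1" "L \<le> z s" using sS unfolding S_def by auto
    have slt: "s < t1" using s1 t1 by (metis order.order_iff_strict)
    have after: "z u < L" if "s < u" "u \<le> t1" for u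
    proof (rule ccontr)
      assume "\<not> z u < L"
      then have "u \<in> S" using that s1 unfolding S_def by auto
      then have "u \<le> s" unfolding s_def using bS by (simp add: cSup_upper)
      then show False using that by simp
    qed
    obtain \<xi> where xi: "s < \<xi>" "\<xi> < t1" "z t1 - z s = (t1 - s) * z' \<xi>"
      using mvt2[OF slt contI, of z'] der s1 t0 by force
    have "z' \<xi> > 0" using H1[of \<xi>] after[of \<xi>] xi s1 t0 by auto
    then have "(t1 - s) * z' \<xi> > 0" using slt by (intro mult_pos_pos) auto
    then have "z t1 > z s" using xi by linarith
    then show False using t1 s1 by simp
  qed
  have ex: "\<exists>t0\<ge>T. L \<le> z t0"
  proof (rule ccontr)
    assume "\<not> ?thesis"
    then have below: "\<And>t. t \<ge> T \<Longrightarrow> z t < L" by force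
    have mono: "z T \<le> z t" if "t \<ge> T" for t
    proof (cases "t = T")
      case False
      then have "T < t" using that by simp
      then obtain \<xi> where xi: "T < \<xi>" "\<xi> < t" "z t - z T = (t - T) * z' \<xi>"
        using mvt2[OF _ contI, of T t z'] der by force
      have "z' \<xi> > 0" using H1 below xi by auto
      then have "(t - T) * z' \<xi> > 0" using \<open>T < t\<close> by (intro mult_pos_pos) auto
      then show ?thesis using xi by linarith
    qed simp
    define t where "t = T + (L - z T) / \<delta> + 1"
    have "L - z T > 0" using below[of T] by simp
    then have tT: "T < t" unfolding t_def using dpos by (simp add: field_simps)
    obtain \<xi> where xi: "T < \<xi>" "\<xi> < t" "z t - z T = (t - T) * z' \<xi>"
      using mvt2[OF tT contI[of T], of z'] der by force
    have "z' \<xi> \<ge> \<delta>" using H2 below mono xi by auto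
    then have "z t - z T \<ge> (t - T) * \<delta>" using xi tT by (simp add: mult_left_mono)
    also have "(t - T) * \<delta> = L - z T + \<delta>" unfolding t_def using dpos by (simp add: field_simps)
    finally have "z t > L" using dpos by simp
    then show False using below[of t] tT by simp
  qed
  then obtain t0 where "t0 \<ge> T" "L \<le> z t0" by blast
  then show ?thesis using inv by blast
qed


lemma growth_lower:
  fixes f g :: "real \<Rightarrow> real"
  assumes t1: "0 \<le> t1" and cont: "continuous_on {0..t1} f"
  and der: "\<And>t. 0 < t \<Longrightarrow> t < t1 \<Longrightarrow> (f has_real_derivative f t * g t) (at t)"
  and pos: "\<And>t. 0 < t \<Longrightarrow> t < t1 \<Longrightarrow> f t > 0"
  and gb: "\<And>t. 0 < t \<Longrightarrow> t < t1 \<Longrightarrow> g t \<ge> - G"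
  and f0: "f 0 > 0"
  shows "f t1 > 0"
proof -
  define w where "w t = f t * exp (G * t)" for t
  have "w 0 \<le> w t1"
  proof (rule DERIV_nonneg_imp_increasing_open[OF t1])
    fix t assume t: "0 < t" "t < t1"
    have fd: "(f has_real_derivative f t * g t) (at t)" by (rule der) (use t in auto)
    have ed: "((\<lambda>t. exp (G * t)) has_real_derivative exp (G * t) * G) (at t)"
      by (auto intro!: derivative_eq_intros)
    have "(w has_real_derivative (f t * g t) * exp (G * t) + exp (G * t) * G * f t) (at t)"
      unfolding w_def using DERIV_mult[OF fd ed] by simp
    moreover have "(f t * g t) * exp (G * t) + exp (G * t) * G * f t = exp (G * t) * (f t * (g t + G))"
      by (simp add: algebra_simps)
    moreover have "exp (G * t) * (f t * (g t + G)) \<ge> 0"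
      using pos[OF t] gb[OF t] by simp
    ultimately show "\<exists>y. (w has_real_derivative y) (at t) \<and> 0 \<le> y" by metis
  next
    show "continuous_on {0..t1} w" unfolding w_def
      by (intro continuous_intros cont)
  qed
  then have "0 < f t1 * exp (G * t1)" using f0 by (simp add: w_def)
  then show ?thesis by (simp add: zero_less_mult_iff)
qed

lemma sol_basic:
  assumes "is_solution a b c k m x y"
  shows "continuous_on {0..} x" "continuous_on {0..} y"
    "\<And>t. t > 0 \<Longrightarrow> (x has_real_derivative (b * x t * (1 - x t - c * y t))) (at t)"
    "\<And>t. t > 0 \<Longrightarrow> (y has_real_derivative (y t * (1 / (1 + k * x t) - y t - a * x t - m * x t * y t))) (at t)"
proof -
  have D: "\<forall>t\<ge>0. (x has_real_derivative (b * x t * (1 - x t - c * y t))) (at t within {0..}) \<and>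
            (y has_real_derivative (y t * (1 / (1 + k * x t) - y t - a * x t - m * x t * y t)))
               (at t within {0..})" using assms unfolding is_solution_def by blast
  show "continuous_on {0..} x" "continuous_on {0..} y"
    unfolding continuous_on_eq_continuous_within
    using D by (auto intro: DERIV_continuous)
  fix t :: real assume t: "t > 0"
  have e: "at t within {0<..} = at t" using t by (intro at_within_open) auto
  have "(x has_real_derivative (b * x t * (1 - x t - c * y t))) (at t within {0<..})"
    by (rule DERIV_subset[of _ _ _ "{0..}"]) (use D t in auto)
  then show "(x has_real_derivative (b * x t * (1 - x t - c * y t))) (at t)" using e by simp
  have "(y has_real_derivative (y t * (1 / (1 + k * x t) - y t - a * x t - m * x t * y t))) (at t within {0<..})"
    by (rule DERIV_subset[of _ _ _ "{0..}"]) (use D t in auto)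
  then show "(y has_real_derivative (y t * (1 / (1 + k * x t) - y t - a * x t - m * x t * y t))) (at t)" using e by simp
qed

lemma sol_pos:
  assumes sol: "is_solution a b c k m x y" and k: "k > 0" and x0: "x 0 > 0" and y0: "y 0 > 0"
  shows "\<forall>t\<ge>0. x t > 0 \<and> y t > 0"
proof (rule ccontr)
  assume neg: "\<not> ?thesis"
  note SB = sol_basic[OF sol]
  define B where "B = {0..} \<inter> (\<lambda>t. min (x t) (y t)) -` {..0}"
  have cB: "closed B" unfolding B_def
    by (rule continuous_closed_preimage) (auto intro!: continuous_intros SB)
  have neB: "B \<noteq> {}" using neg unfolding B_def by force
  have bB: "bdd_below B" unfolding B_def by (auto intro: bdd_belowI[of _ 0])
  define t1 where "t1 = Inf B"
  have t1B: "t1 \<in> B" using closed_contains_Inf[OF neB bB cB] t1_def by simp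
  have t1pos: "t1 \<ge> 0" using t1B unfolding B_def by auto
  have before: "x t > 0 \<and> y t > 0" if "0 \<le> t" "t < t1" for t
  proof (rule ccontr)
    assume "\<not> (x t > 0 \<and> y t > 0)"
    then have "t \<in> B" using that unfolding B_def by auto
    then have "t1 \<le> t" unfolding t1_def using bB by (simp add: cInf_lower)
    then show False using that by simp
  qed
  have cx: "continuous_on {0..t1} x" "continuous_on {0..t1} y"
    using SB(1,2) by (auto intro: continuous_on_subset)
  have "bounded (x ` {0..t1})" "bounded (y ` {0..t1})"
    using cx by (auto intro!: compact_imp_bounded compact_continuous_image)
  then obtain Bx By where Bx: "\<forall>t\<in>{0..t1}. \<bar>x t\<bar> \<le> Bx" and By: "\<forall>t\<in>{0..t1}. \<bar>y t\<bar> \<le> By"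
    unfolding bounded_iff by auto
  define Q where "Q = max 0 (max Bx By)"
  have Qb: "\<bar>x t\<bar> \<le> Q" "\<bar>y t\<bar> \<le> Q" if "0 \<le> t" "t \<le> t1" for t
    using Bx By that unfolding Q_def by force+
  have Q0: "Q \<ge> 0" unfolding Q_def by simp
  have xpos: "x t1 > 0"
  proof (rule growth_lower[OF t1pos cx(1), where g = "\<lambda>t. b * (1 - x t - c * y t)" and G = "\<bar>b\<bar> * (1 + Q + \<bar>c\<bar> * Q)"])
    fix t assume t: "0 < t" "t < t1"
    show "(x has_real_derivative x t * (b * (1 - x t - c * y t))) (at t)"
      using SB(3)[OF t(1)] by (simp add: algebra_simps)
    show "x t > 0" using before t by simp
    have q: "\<bar>x t\<bar> \<le> Q" "\<bar>y t\<bar> \<le> Q" using Qb t by auto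
    have eq: "\<bar>b * (1 - x t - c * y t)\<bar> = \<bar>b\<bar> * \<bar>1 - x t - c * y t\<bar>" by (simp add: abs_mult)
    have "\<bar>1 - x t - c * y t\<bar> \<le> 1 + \<bar>x t\<bar> + \<bar>c\<bar> * \<bar>y t\<bar>" by (simp add: abs_mult[symmetric])
    moreover have "\<bar>c\<bar> * \<bar>y t\<bar> \<le> \<bar>c\<bar> * Q" using q by (simp add: mult_left_mono)
    ultimately have "\<bar>1 - x t - c * y t\<bar> \<le> 1 + Q + \<bar>c\<bar> * Q" using q by linarith
    then have "\<bar>b\<bar> * \<bar>1 - x t - c * y t\<bar> \<le> \<bar>b\<bar> * (1 + Q + \<bar>c\<bar> * Q)"
      by (intro mult_left_mono) auto
    then show "b * (1 - x t - c * y t) \<ge> - (\<bar>b\<bar> * (1 + Q + \<bar>c\<bar> * Q))" using eq by linarith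
  qed (use x0 in auto)
  have ypos: "y t1 > 0"
  proof (rule growth_lower[OF t1pos cx(2), where g = "\<lambda>t. 1 / (1 + k * x t) - y t - a * x t - m * x t * y t" and G = "Q + \<bar>a\<bar> * Q + \<bar>m\<bar> * Q * Q"])
    fix t assume t: "0 < t" "t < t1"
    show "(y has_real_derivative y t * (1 / (1 + k * x t) - y t - a * x t - m * x t * y t)) (at t)"
      using SB(4)[OF t(1)] .
    show "y t > 0" using before t by simp
    have xp: "x t > 0" using before t by simp
    have q: "\<bar>x t\<bar> \<le> Q" "\<bar>y t\<bar> \<le> Q" using Qb t by auto
    have f: "1 / (1 + k * x t) \<ge> 0" using xp k by simp
    have "\<bar>a * x t\<bar> \<le> \<bar>a\<bar> * Q" using q by (simp add: abs_mult mult_left_mono)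
    moreover have "\<bar>m * x t * y t\<bar> \<le> \<bar>m\<bar> * Q * Q" using q Q0
      by (simp add: abs_mult mult_mono mult_left_mono mult.assoc)
    ultimately show "1 / (1 + k * x t) - y t - a * x t - m * x t * y t \<ge> - (Q + \<bar>a\<bar> * Q + \<bar>m\<bar> * Q * Q)"
      using f q by linarith
  qed (use y0 in auto)
  show False using t1B xpos ypos unfolding B_def by auto
qed


lemma upper_gen:
  fixes z z' :: "real \<Rightarrow> real"
  assumes cont: "continuous_on {0..} z"
  and der: "\<And>t. t > 0 \<Longrightarrow> (z has_real_derivative z' t) (at t)"
  and H: "\<And>t. t > 0 \<Longrightarrow> z t > U \<Longrightarrow> z' t \<le> - \<delta>"
  and dpos: "\<delta> > 0"
  shows "\<exists>T. \<forall>t\<ge>T. z t \<le> U"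
proof -
  have "\<exists>T'. \<forall>t\<ge>T'. - U \<le> - z t"
  proof (rule eventually_above[where T = 0 and z' = "\<lambda>t. - z' t" and \<delta> = \<delta>])
    show "continuous_on {0..} (\<lambda>t. - z t)" using cont by (intro continuous_intros)
    fix t :: real assume t: "t > 0"
    show "((\<lambda>t. - z t) has_real_derivative - z' t) (at t)" using der[OF t] by (rule DERIV_minus)
    show "- z t < - U \<Longrightarrow> 0 < - z' t" using H[OF t] dpos by force
    show "- z 0 \<le> - z t \<Longrightarrow> - z t < - U \<Longrightarrow> \<delta> \<le> - z' t" using H[OF t] by force
  qed (rule dpos)
  then show ?thesis by auto
qed

lemma lower_gen:
  fixes z z' :: "real \<Rightarrow> real"
  assumes cont: "continuous_on {0..} z"
  and der: "\<And>t. t > 0 \<Longrightarrow> (z has_real_derivative z' t) (at t)"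
  and T0: "T \<ge> 0"
  and pos: "\<And>t. t \<ge> 0 \<Longrightarrow> z t > 0"
  and H: "\<And>t. t > T \<Longrightarrow> z t < L \<Longrightarrow> z' t \<ge> z t * \<gamma>"
  and gpos: "\<gamma> > 0"
  shows "\<exists>T'. \<forall>t\<ge>T'. L \<le> z t"
proof (rule eventually_above[where T = T and z' = z' and \<delta> = "z T * \<gamma>"])
  show "continuous_on {T..} z" by (rule continuous_on_subset[OF cont]) (use T0 in auto)
  fix t :: real assume t: "t > T"
  show "(z has_real_derivative z' t) (at t)" using der t T0 by auto
  show "z t < L \<Longrightarrow> 0 < z' t" using H[OF t] pos[of t] t T0 gpos
    by (smt (verit) mult_pos_pos)
  show "z T \<le> z t \<Longrightarrow> z t < L \<Longrightarrow> z T * \<gamma> \<le> z' t" using H[OF t] gpos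
    by (smt (verit) mult_right_mono)
qed (use pos[OF T0] gpos in auto)

lemma ar1:
  fixes b c U x y :: real
  assumes "b > 0" "c > 0" "U > 1" "x > U" "y > 0"
  shows "b * x * (1 - x - c * y) \<le> - (b * U * (U - 1))"
proof -
  have "U * (U - 1) \<le> x * (x - 1)" using assms by (intro mult_mono) auto
  also have "\<dots> \<le> x * (x - 1 + c * y)" using assms by (intro mult_left_mono) auto
  finally have "b * (U * (U - 1)) \<le> b * (x * (x - 1 + c * y))" using assms by simp
  then show ?thesis by (simp add: algebra_simps)
qed

lemma ar2:
  fixes a k m U x y :: real
  assumes "a > 0" "k > 0" "m > 0" "U > 1" "y > U" "x > 0"
  shows "y * (1 / (1 + k * x) - y - a * x - m * x * y) \<le> - (U * (U - 1))"
proof -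
  have "k * x > 0" using assms by simp
  then have f: "1 / (1 + k * x) \<le> 1" by (simp add: divide_le_eq)
  have p: "a * x + m * x * y \<ge> 0" using assms by simp
  have "U * (U - 1) \<le> y * (y - 1)" using assms by (intro mult_mono) auto
  also have "y - 1 \<le> y + a * x + m * x * y - 1 / (1 + k * x)" using f p by linarith
  then have "y * (y - 1) \<le> y * (y + a * x + m * x * y - 1 / (1 + k * x))"
    using assms by (intro mult_left_mono) auto
  finally show ?thesis by (simp add: algebra_simps)
qed

lemma ar3:
  fixes b c x y :: real
  assumes "b > 0" "c > 0" "c < 1" "x > 0" "y > 0" "y \<le> (1 + 1 / c) / 2" "x < (1 - c) / 4"
  shows "b * x * (1 - x - c * y) \<ge> b * x * ((1 - c) / 4)"
proof -
  have "c * y \<le> c * ((1 + 1 / c) / 2)" using assms by (intro mult_left_mono) auto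
  also have "\<dots> = (c + 1) / 2" using assms by (simp add: field_simps)
  finally have "c * y \<le> (c + 1) / 2" .
  then have "1 - x - c * y \<ge> (1 - c) / 4" using assms(7) by (simp add: field_simps)
  then show ?thesis using assms by (intro mult_left_mono) auto
qed

lemma ar4:
  fixes a k m Ux x y :: real
  assumes "a > 0" "k > 0" "m > 0" "x > 0" "x \<le> Ux" "y > 0"
    and "y < (1 / (1 + k * Ux) - a * Ux) / (2 * (1 + m * Ux))"
  shows "y * (1 / (1 + k * x) - y - a * x - m * x * y) \<ge> y * ((1 / (1 + k * Ux) - a * Ux) / 2)"
proof -
  define p where "p = 1 / (1 + k * Ux) - a * Ux"
  have b: "1 + m * Ux > 0" using assms by (smt (verit) mult_pos_pos)
  have y2: "y * (1 + m * Ux) < p / 2" using assms(7) b unfolding p_def by (simp add: field_simps)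
  have "y * (1 + m * x) \<le> y * (1 + m * Ux)" using assms by (intro mult_left_mono) auto
  then have e1: "y + m * x * y \<le> y * (1 + m * Ux)" by (simp add: algebra_simps)
  have f: "1 / (1 + k * x) \<ge> 1 / (1 + k * Ux)" using assms
    by (intro divide_left_mono mult_pos_pos) (auto intro: mult_left_mono add_pos_pos)
  then have f2: "1 / (1 + k * x) \<ge> p + a * Ux" unfolding p_def by simp
  have "a * x \<le> a * Ux" using assms by simp
  then have "1 / (1 + k * x) - y - a * x - m * x * y \<ge> p / 2"
    using f2 y2 e1 by linarith
  then show ?thesis using assms unfolding p_def by (intro mult_left_mono) auto
qed

lemma exUx:
  fixes a k :: real
  assumes "a > 0" "k > 0" "a * (1 + k) < 1"
  shows "\<exists>Ux>1. 1 / (1 + k * Ux) - a * Ux > 0"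
proof -
  define q where "q = a * (1 + k)"
  define s where "s = (1 - q) / (2 * (1 + 2 * a * k))"
  have d: "1 + 2 * a * k > 0" using assms by (smt (verit) mult_pos_pos)
  have s0: "s > 0" unfolding s_def q_def using assms d by simp
  have s1: "s \<le> 1" unfolding s_def q_def using assms d by (simp add: field_simps)
  have sq: "s * (1 + 2 * a * k) = (1 - q) / 2" unfolding s_def using d by (simp add: field_simps)
  have q0: "q < 1" "q > 0" using assms unfolding q_def by auto
  have "a * (1 + s) * (1 + k * (1 + s)) = q * (1 + s) + a * k * s * (1 + s)"
    unfolding q_def by (simp add: algebra_simps)
  also have "a * k * s * (1 + s) \<le> a * k * s * 2"
    using assms s0 s1 by (intro mult_left_mono) auto
  also have "q * (1 + s) \<le> q + s" using q0 s0 by (simp add: algebra_simps)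
  finally have "a * (1 + s) * (1 + k * (1 + s)) \<le> q + s * (1 + 2 * a * k)" by (simp add: algebra_simps)
  also have "\<dots> < 1" using sq q0 by simp
  finally have lt: "a * (1 + s) * (1 + k * (1 + s)) < 1" .
  have pos: "1 + k * (1 + s) > 0" using assms s0 by (smt (verit) mult_pos_pos)
  have "a * (1 + s) < 1 / (1 + k * (1 + s))" using lt pos by (simp add: field_simps)
  then show ?thesis using s0 by (intro exI[of _ "1 + s"]) auto
qed


lemma ev_bounds:
  fixes a b c k m :: real
  assumes "a > 0" "b > 0" "c > 0" "k > 0" "m > 0" "c < 1"
    and Ux: "Ux > 1" "1 / (1 + k * Ux) - a * Ux > 0"
    and sol: "is_solution a b c k m x y" and x0: "x 0 > 0" and y0: "y 0 > 0"
  shows "\<exists>T. \<forall>t\<ge>T. x t \<le> 2 \<and> y t \<le> 2 \<and> (1 - c) / 4 \<le> x t \<and>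
     (1 / (1 + k * Ux) - a * Ux) / (2 * (1 + m * Ux)) \<le> y t"
proof -
  note SB = sol_basic[OF sol]
  have pos: "\<And>t. t \<ge> 0 \<Longrightarrow> x t > 0 \<and> y t > 0" using sol_pos[OF sol \<open>k > 0\<close> x0 y0] by blast
  have xup: "\<exists>T. \<forall>t\<ge>T. x t \<le> U" if U: "U > 1" for U
  proof (rule upper_gen[OF SB(1) SB(3), where \<delta> = "b * U * (U - 1)"])
    fix t :: real assume "t > 0" "x t > U"
    then show "b * x t * (1 - x t - c * y t) \<le> - (b * U * (U - 1))"
      using ar1[of b c U "x t" "y t"] assms pos[of t] U by auto
  qed (use U assms in auto)
  have yup: "\<exists>T. \<forall>t\<ge>T. y t \<le> U" if U: "U > 1" for U
  proof (rule upper_gen[OF SB(2) SB(4), where \<delta> = "U * (U - 1)"])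
    fix t :: real assume "t > 0" "y t > U"
    then show "y t * (1 / (1 + k * x t) - y t - a * x t - m * x t * y t) \<le> - (U * (U - 1))"
      using ar2[of a k m U "y t" "x t"] assms pos[of t] U by auto
  qed (use U in auto)
  obtain T1 where T1: "\<forall>t\<ge>T1. x t \<le> 2" using xup[of 2] by auto
  obtain T2 where T2: "\<forall>t\<ge>T2. y t \<le> 2" using yup[of 2] by auto
  have Uy: "(1 + 1 / c) / 2 > 1" using assms by (simp add: field_simps)
  obtain T3 where T3: "\<forall>t\<ge>T3. y t \<le> (1 + 1 / c) / 2" using yup[OF Uy] by auto
  obtain T4 where T4: "\<forall>t\<ge>T4. x t \<le> Ux" using xup[OF Ux(1)] by auto
  obtain T5 where T5: "\<forall>t\<ge>T5. (1 - c) / 4 \<le> x t"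
  proof -
    have "\<exists>T'. \<forall>t\<ge>T'. (1 - c) / 4 \<le> x t"
    proof (rule lower_gen[OF SB(1) SB(3), where T = "max 0 T3" and \<gamma> = "b * ((1 - c) / 4)"])
      fix t :: real assume t: "max 0 T3 < t" "x t < (1 - c) / 4"
      then show "x t * (b * ((1 - c) / 4)) \<le> b * x t * (1 - x t - c * y t)"
        using ar3[of b c "x t" "y t"] assms pos[of t] T3 by (auto simp: algebra_simps)
    qed (use pos assms in auto)
    then show ?thesis using that by blast
  qed
  obtain T6 where T6: "\<forall>t\<ge>T6. (1 / (1 + k * Ux) - a * Ux) / (2 * (1 + m * Ux)) \<le> y t"
  proof -
    have "\<exists>T'. \<forall>t\<ge>T'. (1 / (1 + k * Ux) - a * Ux) / (2 * (1 + m * Ux)) \<le> y t"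
    proof (rule lower_gen[OF SB(2) SB(4), where T = "max 0 T4" and \<gamma> = "(1 / (1 + k * Ux) - a * Ux) / 2"])
      fix t :: real assume t: "max 0 T4 < t" "y t < (1 / (1 + k * Ux) - a * Ux) / (2 * (1 + m * Ux))"
      then show "y t * ((1 / (1 + k * Ux) - a * Ux) / 2) \<le> y t * (1 / (1 + k * x t) - y t - a * x t - m * x t * y t)"
        using ar4[of a k m "x t" Ux "y t"] assms pos[of t] T4 by auto
    qed (use pos Ux in auto)
    then show ?thesis using that by blast
  qed
  show ?thesis
    by (rule exI[of _ "max (max T1 T2) (max T5 T6)"]) (use T1 T2 T5 T6 in auto)
qed

theorem theorem3:
  fixes a b c k m :: real
  assumes "a > 0" "b > 0" "c > 0" "k > 0" "m > 0"
    and "k < 1 / a - 1"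
    and "c < 1"
  shows "\<exists>\<mu> M. 0 < \<mu> \<and> \<mu> \<le> M \<and>
    (\<forall>x y. is_solution a b c k m x y \<and> x 0 > 0 \<and> y 0 > 0 \<longrightarrow>
       ereal \<mu> \<le> Liminf at_top (\<lambda>t. ereal (x t)) \<and>
       Liminf at_top (\<lambda>t. ereal (x t)) \<le> Limsup at_top (\<lambda>t. ereal (x t)) \<and>
       Limsup at_top (\<lambda>t. ereal (x t)) \<le> ereal M \<and>
       ereal \<mu> \<le> Liminf at_top (\<lambda>t. ereal (y t)) \<and>
       Liminf at_top (\<lambda>t. ereal (y t)) \<le> Limsup at_top (\<lambda>t. ereal (y t)) \<and>
       Limsup at_top (\<lambda>t. ereal (y t)) \<le> ereal M)"
proof -
  have "a * (1 + k) < 1" using assms by (simp add: field_simps)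
  then obtain Ux where Ux: "Ux > 1" "1 / (1 + k * Ux) - a * Ux > 0"
    using exUx[of a k] assms by auto
  define p where "p = 1 / (1 + k * Ux) - a * Ux"
  define Ly where "Ly = p / (2 * (1 + m * Ux))"
  define \<mu> where "\<mu> = min ((1 - c) / 4) Ly"
  have mpos: "1 + m * Ux > 1" using assms Ux by simp
  have p1: "p \<le> 1" unfolding p_def using assms Ux
    by (smt (verit) divide_le_eq_1 mult_pos_pos)
  have Ly: "0 < Ly" "Ly \<le> 2" unfolding Ly_def using Ux(2) mpos p1 unfolding p_def
    by (auto simp: field_simps)
  have mu: "0 < \<mu>" "\<mu> \<le> 2" unfolding \<mu>_def using Ly assms by auto
  show ?thesis
  proof (rule exI[of _ \<mu>], rule exI[of _ "2::real"], intro conjI allI impI mu)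
    fix x y assume H: "is_solution a b c k m x y \<and> x 0 > 0 \<and> y 0 > 0"
    obtain T where T: "\<forall>t\<ge>T. x t \<le> 2 \<and> y t \<le> 2 \<and> (1 - c) / 4 \<le> x t \<and> Ly \<le> y t"
      using ev_bounds[OF assms(1-5,7) Ux, of x y] H unfolding Ly_def p_def by auto
    have ev: "eventually (\<lambda>t. x t \<le> 2 \<and> y t \<le> 2 \<and> \<mu> \<le> x t \<and> \<mu> \<le> y t) at_top"
      unfolding eventually_at_top_linorder using T unfolding \<mu>_def
      by (intro exI[of _ T]) (auto simp: min_le_iff_disj)
    have nt: "\<not> trivial_limit (at_top :: real filter)" by simp
    show "ereal \<mu> \<le> Liminf at_top (\<lambda>t. ereal (x t))"
      by (rule Liminf_bounded) (use ev in \<open>auto elim!: eventually_mono\<close>)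
    show "ereal \<mu> \<le> Liminf at_top (\<lambda>t. ereal (y t))"
      by (rule Liminf_bounded) (use ev in \<open>auto elim!: eventually_mono\<close>)
    show "Limsup at_top (\<lambda>t. ereal (x t)) \<le> ereal 2"
      by (rule Limsup_bounded) (use ev in \<open>auto elim!: eventually_mono\<close>)
    show "Limsup at_top (\<lambda>t. ereal (y t)) \<le> ereal 2"
      by (rule Limsup_bounded) (use ev in \<open>auto elim!: eventually_mono\<close>)
    show "Liminf at_top (\<lambda>t. ereal (x t)) \<le> Limsup at_top (\<lambda>t. ereal (x t))"
      by (rule Liminf_le_Limsup[OF nt])
    show "Liminf at_top (\<lambda>t. ereal (y t)) \<le> Limsup at_top (\<lambda>t. ereal (y t))"
      by (rule Liminf_le_Limsup[OF nt])
  qed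
qed

end
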